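(* Let $L$ be a positive integer and let $a,b,s$ be integers with $a\mid L$, $b\mid L$, $0\le s<b$, $s\in\frac{ab}{\gcd(ab,L)}\mathbb{Z}$; let $\Lambda=\begin{pmatrix} a&0\\ s&b\end{pmatrix}\mathbb{Z}_L^2$, $\lambda_2=b/\gcd(b,s)$, $\tilde a=\lambda_2a$, and let $\tilde\Lambda$ be the subgroup of $\mathbb{Z}_L^2$ generated by $(\tilde a,0)^T$ and $(0,b)^T$. Let $g\in\mathbb{C}^L$ and for $0\le m<\lambda_2$ put $g_m=\mathbf M_{ms\bmod b}\mathbf T_{ma}g$. Then for all $f\in\mathbb{C}^L$ $$\mathbf S_{g,\Lambda}f=\sum_{m=0}^{\lambda_2-1}\mathbf S_{g_m,\tilde\Lambda}f .$$ Moreover, for all $f\in\mathbb{C}^L$, $n\in\{0,\dots,L/a-1\}$ and $k\in\{0,\dots,L/b-1\}$, writing $\tilde n=\lfloor n/\lambda_2\rfloor$ and $m=n-\lambda_2\tilde n$, $$\langle f,\mathbf M_{kb+(ms\bmod b)}\mathbf T_{na}g\rangle=e^{-2\pi i\tilde n\tilde a(ms\bmod b)/L}\,\langle f,\mathbf M_{kb}\mathbf T_{\tilde n\tilde a}g_m\rangle .$$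
   Context: Signals are vectors in $\mathbb{C}^L$ indexed by $\mathbb{Z}_L$, with $\langle f,h\rangle=\sum_{l=0}^{L-1}f(l)\overline{h(l)}$. $\mathbf T_xf(l)=f(l-x)$ (indices mod $L$), $\mathbf M_\omega f(l)=e^{2\pi il\omega/L}f(l)$, and $\pi(x,\omega)=\mathbf M_\omega\mathbf T_x$. For $h\in\mathbb{C}^L$ and a subgroup $\Gamma\le\mathbb{Z}_L^2$, the frame operator is $\mathbf S_{h,\Gamma}f=\sum_{(x,\omega)^T\in\Gamma}\langle f,\pi(x,\omega)h\rangle\,\pi(x,\omega)h$. $A\mathbb{Z}_L^2=\{Az\bmod L:z\in\mathbb{Z}_L^2\}$. *)

theory Defs
  imports Complex_Main
begin

text \<open>Signals in C^L are modelled as functions int => complex; only values at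
indices 0..L-1 enter the inner product, and translations read indices mod L.\<close>

type_synonym signal = "int \<Rightarrow> complex"

definition inner_L :: "int \<Rightarrow> signal \<Rightarrow> signal \<Rightarrow> complex" where
  "inner_L L f h = (\<Sum>l\<in>{0..<L}. f l * cnj (h l))"

definition transl :: "int \<Rightarrow> int \<Rightarrow> signal \<Rightarrow> signal" where
  "transl L x f = (\<lambda>l. f ((l - x) mod L))"

definition modul :: "int \<Rightarrow> int \<Rightarrow> signal \<Rightarrow> signal" where
  "modul L \<omega> f = (\<lambda>l. exp (2 * pi * \<i> * of_int l * of_int \<omega> / of_int L) * f l)"

definition tf_shift :: "int \<Rightarrow> int \<Rightarrow> int \<Rightarrow> signal \<Rightarrow> signal" where
  "tf_shift L x \<omega> f = modul L \<omega> (transl L x f)"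

definition frame_op :: "int \<Rightarrow> signal \<Rightarrow> (int \<times> int) set \<Rightarrow> signal \<Rightarrow> signal" where
  "frame_op L h \<Gamma> f = (\<lambda>l. \<Sum>(x,\<omega>)\<in>\<Gamma>.
      inner_L L f (tf_shift L x \<omega> h) * tf_shift L x \<omega> h l)"

definition mat_lattice :: "int \<Rightarrow> int \<Rightarrow> int \<Rightarrow> int \<Rightarrow> int \<Rightarrow> (int \<times> int) set" where
  "mat_lattice L a11 a12 a21 a22 =
     {((a11 * z1 + a12 * z2) mod L, (a21 * z1 + a22 * z2) mod L) | z1 z2. z1 \<in> {0..<L} \<and> z2 \<in> {0..<L}}"

definition gen_subgroup2 :: "int \<Rightarrow> int \<times> int \<Rightarrow> int \<times> int \<Rightarrow> (int \<times> int) set" where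
  "gen_subgroup2 L v w =
     {((i * fst v + j * fst w) mod L, (i * snd v + j * snd w) mod L) | i j :: int. True}"

end

theory Submission
  imports Defs "HOL-Analysis.Analysis"
begin


definition ee :: "int \<Rightarrow> int \<Rightarrow> complex" where
  "ee L j = exp (2 * pi * \<i> * of_int j / of_int L)"

lemma ee_add: "ee L (j + k) = ee L j * ee L k"
  unfolding ee_def by (simp add: exp_add[symmetric] add_divide_distrib distrib_left)

lemma ee_period:
  assumes "L \<noteq> 0" "j mod L = j' mod L"
  shows "ee L j = ee L j'"
proof -
  have "L dvd j' - j" using assms(2)[symmetric] by (simp add: mod_eq_dvd_iff)
  then obtain q where q: "j' - j = L * q" by blast
  hence q': "j' = j + L * q" by simp
  have "2 * pi * \<i> * of_int j' / of_int L = 2 * pi * \<i> * of_int j / of_int L + \<i> * (of_int q * (of_real pi * 2))"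
    unfolding q' using assms(1) by (simp add: field_simps)
  thus ?thesis unfolding ee_def by simp
qed

lemma ee_cnj: "cnj (ee L j) * ee L j = 1"
proof -
  have "cnj (ee L j) = exp (- (2 * pi * \<i> * of_int j / of_int L))"
    unfolding ee_def exp_cnj by simp
  thus ?thesis unfolding ee_def by (simp add: exp_minus field_simps)
qed

lemma ee_neg: "ee L (-j) = cnj (ee L j)"
  unfolding ee_def exp_cnj by (simp add: exp_minus)

lemma tf_shift_eq: "tf_shift L x \<omega> g l = ee L (l * \<omega>) * g ((l - x) mod L)"
  unfolding tf_shift_def modul_def transl_def ee_def by (simp add: mult.assoc)

lemma tf_shift_mod:
  assumes "L \<noteq> 0"
  shows "tf_shift L (x mod L) (\<omega> mod L) g = tf_shift L x \<omega> g"
proof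
  fix l
  have "ee L (l * (\<omega> mod L)) = ee L (l * \<omega>)"
    by (rule ee_period[OF assms]) (simp add: mod_mult_right_eq)
  moreover have "(l - x mod L) mod L = (l - x) mod L" by (simp add: mod_diff_right_eq)
  ultimately show "tf_shift L (x mod L) (\<omega> mod L) g l = tf_shift L x \<omega> g l"
    by (simp add: tf_shift_eq)
qed

lemma tf_shift_comp:
  assumes "L \<noteq> 0"
  shows "tf_shift L x \<omega> (tf_shift L x0 \<omega>0 g) l
       = ee L (- (x * \<omega>0)) * tf_shift L (x + x0) (\<omega> + \<omega>0) g l"
proof -
  have 1: "ee L (((l - x) mod L) * \<omega>0) = ee L ((l - x) * \<omega>0)"
    by (rule ee_period[OF assms]) (simp add: mod_mult_left_eq)
  have 2: "((l - x) mod L - x0) mod L = (l - (x + x0)) mod L"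
    by (simp add: mod_diff_left_eq algebra_simps)
  have 3: "ee L (l * \<omega>) * ee L ((l - x) * \<omega>0) = ee L (- (x * \<omega>0)) * ee L (l * (\<omega> + \<omega>0))"
    by (simp add: ee_add[symmetric] algebra_simps)
  show ?thesis
    by (simp add: tf_shift_eq 1 2 mult.assoc 3[symmetric])
qed

lemma inner_scale: "inner_L L f (\<lambda>l. c * h l) = cnj c * inner_L L f h"
  unfolding inner_L_def by (simp add: sum_distrib_left algebra_simps)

lemma range_inj:
  fixes c p n n' :: int
  assumes "0 < c" "0 \<le> n" "n < p" "0 \<le> n'" "n' < p" "(c * p) dvd (n - n') * c"
  shows "n = n'"
proof -
  have "p dvd n - n'" using assms(1,6) by (metis dvd_mult_cancel_right mult.commute less_irrefl)
  show ?thesis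
  proof (rule ccontr)
    assume "n \<noteq> n'"
    hence "\<bar>p\<bar> \<le> \<bar>n - n'\<bar>" using \<open>p dvd n - n'\<close> dvd_imp_le_int by auto
    thus False using assms by linarith
  qed
qed

lemma mult_mod_reduce:
  fixes x c p :: int
  shows "(x * c) mod (c * p) = ((x mod p) * c) mod (c * p)"
  by (metis mod_mult_mult2 mult.commute mod_mod_trivial)

lemma residue_bij:
  fixes L b c :: int
  assumes "0 < b" "b dvd L" "0 < L"
  shows "bij_betw (\<lambda>k. (c + k * b) mod L) {0..<L div b} {w\<in>{0..<L}. w mod b = c mod b}"
proof -
  obtain p where Lp: "L = b * p" using assms(2) by blast
  have pdiv: "L div b = p" using Lp assms(1) by simp
  show ?thesis unfolding bij_betw_def
  proof (intro conjI)
    show "inj_on (\<lambda>k. (c + k * b) mod L) {0..<L div b}"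
    proof (rule inj_onI)
      fix k k' assume k: "k \<in> {0..<L div b}" "k' \<in> {0..<L div b}"
        and e: "(c + k * b) mod L = (c + k' * b) mod L"
      have "L dvd (c + k * b) - (c + k' * b)" using e by (simp add: mod_eq_dvd_iff)
      hence "(b * p) dvd (k - k') * b" using Lp by (simp add: algebra_simps)
      thus "k = k'" using range_inj[OF assms(1)] k pdiv by auto
    qed
    show "(\<lambda>k. (c + k * b) mod L) ` {0..<L div b} = {w\<in>{0..<L}. w mod b = c mod b}"
    proof (rule set_eqI, rule iffI)
      fix w assume "w \<in> (\<lambda>k. (c + k * b) mod L) ` {0..<L div b}"
      then obtain k where w: "w = (c + k * b) mod L" by auto
      have "w mod b = (c + k * b) mod b" unfolding w Lp by (simp add: mod_mod_cancel)
      thus "w \<in> {w\<in>{0..<L}. w mod b = c mod b}" using w assms(3) by simp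
    next
      fix w assume w: "w \<in> {w\<in>{0..<L}. w mod b = c mod b}"
      hence "b dvd w - c" by (simp add: mod_eq_dvd_iff)
      then obtain j where j: "w - c = b * j" by blast
      define k where "k = j mod p"
      have p0: "0 < p" using Lp assms by (simp add: zero_less_mult_iff)
      have "(c + k * b) mod L = (c + j * b) mod L"
      proof -
        have jj: "j = j div p * p + k" by (simp add: k_def)
        have "j * b = (j div p * p + k) * b" using jj by simp
        hence jb: "j * b = k * b + (j div p) * L" unfolding Lp by (simp add: algebra_simps)
        have "(c + k * b + (j div p) * L) mod L = (c + k * b) mod L" by (rule mod_mult_self1)
        thus ?thesis unfolding jb by (simp only: add.assoc)
      qed
      also have "\<dots> = w mod L"
      proof -
        have "c + j * b = w" using j by (simp add: algebra_simps)
        thus ?thesis by simp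
      qed
      also have "\<dots> = w" using w by simp
      finally have wk: "w = (c + k * b) mod L" by simp
      have "k \<in> {0..<L div b}" using pdiv p0 unfolding k_def by simp
      thus "w \<in> (\<lambda>k. (c + k * b) mod L) ` {0..<L div b}"
        using wk by (rule rev_image_eqI)
    qed
  qed
qed



lemma nt_facts:
  fixes L a b s :: int
  assumes L: "0 < L" and a: "0 < a" and ad: "a dvd L" and bd: "b dvd L"
    and s0: "0 \<le> s" and sb: "s < b" and sm: "(a * b) div gcd (a * b) L dvd s"
  shows "b dvd s * (L div a)" "0 < b div gcd b s" "b dvd (b div gcd b s) * s"
    "(b div gcd b s) dvd (L div a)"
proof -
  have b: "0 < b" using s0 sb by simp
  define d where "d = gcd (a * b) L"
  have d0: "0 < d" unfolding d_def using L by simp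
  obtain u where u: "a * b = d * u" unfolding d_def by (meson dvdE gcd_dvd1)
  obtain v where v: "L = d * v" unfolding d_def by (meson dvdE gcd_dvd2)
  have ud: "(a * b) div d = u" using u d0 by simp
  obtain w where w: "s = u * w" using sm ud unfolding d_def[symmetric] by (auto elim: dvdE)
  obtain pa where pa: "L = a * pa" using ad by (auto elim: dvdE)
  have pad: "L div a = pa" using pa a by simp
  have "d * (u * pa) = d * (b * v)" using u v pa by (metis mult.assoc mult.commute)
  hence upa: "u * pa = b * v" using d0 by simp
  have "s * pa = b * (v * w)" using w upa by (metis mult.assoc mult.commute)
  thus s1: "b dvd s * (L div a)" unfolding pad by simp
  define g where "g = gcd b s"
  have g0: "0 < g" unfolding g_def using b by simp
  obtain b' where b': "b = g * b'" unfolding g_def by (meson dvdE gcd_dvd1)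
  obtain s' where s': "s = g * s'" unfolding g_def by (meson dvdE gcd_dvd2)
  have bd': "b div g = b'" using b' g0 by simp
  have bp: "0 < b'" using b b' g0 by (simp add: zero_less_mult_iff)
  thus "0 < b div gcd b s" using bd' g_def by simp
  have "b' * s = b * s'" using b' s' by simp
  thus "b dvd (b div gcd b s) * s" using bd' g_def by simp
  have cop: "coprime b' s'" using div_gcd_coprime[of b s] b bd' s' g0 unfolding g_def[symmetric]
    by simp
  have "g * b' dvd g * (s' * pa)" using s1 b' s' pad by (simp add: mult.assoc)
  hence "b' dvd s' * pa" using g0 by simp
  hence "b' dvd pa" using cop by (simp add: coprime_dvd_mult_right_iff)
  thus "(b div gcd b s) dvd (L div a)" using bd' pad g_def by simp
qed


lemma lam_image:
  fixes L a b s :: int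
  assumes L: "0 < L" and a: "0 < a" and b: "0 < b" and ad: "a dvd L" and bd: "b dvd L"
    and sd: "b dvd s * (L div a)"
  shows "mat_lattice L a 0 s b
     = (\<lambda>(n,k). ((n * a) mod L, (n * s + k * b) mod L)) ` ({0..<L div a} \<times> {0..<L div b})"
    "inj_on (\<lambda>(n,k). ((n * a) mod L, (n * s + k * b) mod L)) ({0..<L div a} \<times> {0..<L div b})"
proof -
  obtain pa where pa: "L = a * pa" using ad by (auto elim: dvdE)
  obtain pb where pb: "L = b * pb" using bd by (auto elim: dvdE)
  have pad: "L div a = pa" using pa a by simp
  have pbd: "L div b = pb" using pb b by simp
  have pa0: "0 < pa" using pa L a by (simp add: zero_less_mult_iff)
  have pb0: "0 < pb" using pb L b by (simp add: zero_less_mult_iff)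
  obtain t where t: "s * pa = b * t" using sd pad by (auto elim: dvdE)
  show "mat_lattice L a 0 s b
     = (\<lambda>(n,k). ((n * a) mod L, (n * s + k * b) mod L)) ` ({0..<L div a} \<times> {0..<L div b})"
  proof (rule set_eqI, rule iffI)
    fix y assume "y \<in> mat_lattice L a 0 s b"
    then obtain z1 z2 where y: "y = ((a * z1 + 0 * z2) mod L, (s * z1 + b * z2) mod L)"
      unfolding mat_lattice_def by blast
    define n where "n = z1 mod pa"
    define q where "q = z1 div pa"
    define K where "K = q * t + z2"
    define k where "k = K mod pb"
    have z1: "z1 = q * pa + n" unfolding n_def q_def by simp
    have e1: "(a * z1 + 0 * z2) mod L = (n * a) mod L"
      using mult_mod_reduce[of z1 a pa] unfolding pa n_def by (simp add: mult.commute)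
    have "s * z1 + b * z2 = n * s + K * b" unfolding K_def z1
      using t by (simp add: algebra_simps)
    also have "\<dots> mod L = (n * s + (K * b) mod L) mod L" by (simp add: mod_add_right_eq)
    also have "(K * b) mod L = (k * b) mod L"
      using mult_mod_reduce[of K b pb] unfolding pb k_def by simp
    also have "(n * s + (k * b) mod L) mod L = (n * s + k * b) mod L" by (simp add: mod_add_right_eq)
    finally have e2: "(s * z1 + b * z2) mod L = (n * s + k * b) mod L" .
    have "(n, k) \<in> {0..<L div a} \<times> {0..<L div b}"
      unfolding n_def k_def pad pbd using pa0 pb0 by simp
    thus "y \<in> (\<lambda>(n,k). ((n * a) mod L, (n * s + k * b) mod L)) ` ({0..<L div a} \<times> {0..<L div b})"
      using y e1 e2 by (auto intro!: image_eqI[where x = "(n, k)"])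
  next
    fix y assume "y \<in> (\<lambda>(n,k). ((n * a) mod L, (n * s + k * b) mod L)) ` ({0..<L div a} \<times> {0..<L div b})"
    then obtain n k where nk: "n \<in> {0..<L div a}" "k \<in> {0..<L div b}"
      and y: "y = ((n * a) mod L, (n * s + k * b) mod L)" by auto
    have "L div a \<le> L" using pa a pa0 pad by (simp add: mult_le_cancel_right1)
    moreover have "L div b \<le> L" using pb b pb0 pbd by (simp add: mult_le_cancel_right1)
    ultimately have "n \<in> {0..<L}" "k \<in> {0..<L}" using nk by auto
    moreover have "y = ((a * n + 0 * k) mod L, (s * n + b * k) mod L)" using y by (simp add: mult.commute)
    ultimately show "y \<in> mat_lattice L a 0 s b" unfolding mat_lattice_def by blast
  qed
  show "inj_on (\<lambda>(n,k). ((n * a) mod L, (n * s + k * b) mod L)) ({0..<L div a} \<times> {0..<L div b})"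
  proof (rule inj_onI, clarify)
    fix n k n' k'
    assume n: "n \<in> {0..<L div a}" "k \<in> {0..<L div b}" "n' \<in> {0..<L div a}" "k' \<in> {0..<L div b}"
      and e1: "(n * a) mod L = (n' * a) mod L" and e2: "(n * s + k * b) mod L = (n' * s + k' * b) mod L"
    have "L dvd n * a - n' * a" using e1 by (simp add: mod_eq_dvd_iff)
    hence "(a * pa) dvd (n - n') * a" by (metis pa left_diff_distrib)
    hence nn: "n = n'" using range_inj[OF a] n pad by auto
    have "L dvd (n * s + k * b) - (n' * s + k' * b)" using e2 by (simp add: mod_eq_dvd_iff)
    hence "L dvd k * b - k' * b" using nn by simp
    hence "(b * pb) dvd (k - k') * b" by (metis pb left_diff_distrib)
    thus "n = n' \<and> k = k'" using range_inj[OF b] n pbd nn by auto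
  qed
qed


lemma lamt_image:
  fixes L c b :: int
  assumes L: "0 < L" and c: "0 < c" and b: "0 < b" and cd: "c dvd L" and bd: "b dvd L"
  shows "gen_subgroup2 L (c, 0) (0, b)
     = (\<lambda>(n,k). ((n * c) mod L, (k * b) mod L)) ` ({0..<L div c} \<times> {0..<L div b})"
    "inj_on (\<lambda>(n,k). ((n * c) mod L, (k * b) mod L)) ({0..<L div c} \<times> {0..<L div b})"
proof -
  obtain pa where pa: "L = c * pa" using cd by (auto elim: dvdE)
  obtain pb where pb: "L = b * pb" using bd by (auto elim: dvdE)
  have pad: "L div c = pa" using pa c by simp
  have pbd: "L div b = pb" using pb b by simp
  have pa0: "0 < pa" using pa L c by (simp add: zero_less_mult_iff)
  have pb0: "0 < pb" using pb L b by (simp add: zero_less_mult_iff)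
  show "gen_subgroup2 L (c, 0) (0, b)
     = (\<lambda>(n,k). ((n * c) mod L, (k * b) mod L)) ` ({0..<L div c} \<times> {0..<L div b})"
  proof (rule set_eqI, rule iffI)
    fix y assume "y \<in> gen_subgroup2 L (c, 0) (0, b)"
    then obtain i j where y: "y = ((i * c + j * 0) mod L, (i * 0 + j * b) mod L)"
      unfolding gen_subgroup2_def by auto
    have e1: "(i * c) mod L = ((i mod pa) * c) mod L"
      using mult_mod_reduce[of i c pa] unfolding pa by simp
    have e2: "(j * b) mod L = ((j mod pb) * b) mod L"
      using mult_mod_reduce[of j b pb] unfolding pb by simp
    have "(i mod pa, j mod pb) \<in> {0..<L div c} \<times> {0..<L div b}"
      unfolding pad pbd using pa0 pb0 by simp
    thus "y \<in> (\<lambda>(n,k). ((n * c) mod L, (k * b) mod L)) ` ({0..<L div c} \<times> {0..<L div b})"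
      using y e1 e2 by (auto intro!: image_eqI[where x = "(i mod pa, j mod pb)"])
  next
    fix y assume "y \<in> (\<lambda>(n,k). ((n * c) mod L, (k * b) mod L)) ` ({0..<L div c} \<times> {0..<L div b})"
    then obtain n k where y: "y = ((n * c) mod L, (k * b) mod L)" by auto
    have "y = ((n * fst (c, 0::int) + k * fst (0::int, b)) mod L, (n * snd (c, 0::int) + k * snd (0::int, b)) mod L)"
      using y by simp
    thus "y \<in> gen_subgroup2 L (c, 0) (0, b)" unfolding gen_subgroup2_def by blast
  qed
  show "inj_on (\<lambda>(n,k). ((n * c) mod L, (k * b) mod L)) ({0..<L div c} \<times> {0..<L div b})"
  proof (rule inj_onI, clarify)
    fix n k n' k'
    assume n: "n \<in> {0..<L div c}" "k \<in> {0..<L div b}" "n' \<in> {0..<L div c}" "k' \<in> {0..<L div b}"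
      and e1: "(n * c) mod L = (n' * c) mod L" and e2: "(k * b) mod L = (k' * b) mod L"
    have "L dvd n * c - n' * c" using e1 by (simp add: mod_eq_dvd_iff)
    hence "(c * pa) dvd (n - n') * c" by (metis pa left_diff_distrib)
    hence nn: "n = n'" using range_inj[OF c] n pad by auto
    have "L dvd k * b - k' * b" using e2 by (simp add: mod_eq_dvd_iff)
    hence "(b * pb) dvd (k - k') * b" by (metis pb left_diff_distrib)
    thus "n = n' \<and> k = k'" using range_inj[OF b] n pbd nn by auto
  qed
qed


lemma split_sum:
  fixes lam pt :: int and H :: "int \<Rightarrow> complex"
  assumes lam: "0 < lam"
  shows "(\<Sum>n\<in>{0..<lam * pt}. H n) = (\<Sum>m\<in>{0..<lam}. \<Sum>t\<in>{0..<pt}. H (lam * t + m))"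
proof -
  have bij: "bij_betw (\<lambda>(m,t). lam * t + m) ({0..<lam} \<times> {0..<pt}) {0..<lam * pt}"
    unfolding bij_betw_def
  proof (intro conjI)
    show "inj_on (\<lambda>(m,t). lam * t + m) ({0..<lam} \<times> {0..<pt})"
    proof (rule inj_onI, clarify)
      fix m t m' t' assume m: "m \<in> {0..<lam}" "t \<in> {0..<pt}" "m' \<in> {0..<lam}" "t' \<in> {0..<pt}"
        and e: "lam * t + m = lam * t' + m'"
      have "(lam * t + m) div lam = t" "(lam * t + m) mod lam = m" using m lam by simp_all
      moreover have "(lam * t' + m') div lam = t'" "(lam * t' + m') mod lam = m'" using m lam by simp_all
      ultimately show "m = m' \<and> t = t'" using e by metis
    qed
    show "(\<lambda>(m,t). lam * t + m) ` ({0..<lam} \<times> {0..<pt}) = {0..<lam * pt}"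
    proof (rule set_eqI, rule iffI)
      fix n assume "n \<in> (\<lambda>(m,t). lam * t + m) ` ({0..<lam} \<times> {0..<pt})"
      then obtain m t where n: "n = lam * t + m" "0 \<le> m" "m < lam" "0 \<le> t" "t < pt" by auto
      have "lam * t + m < lam * (t + 1)" using n by (simp add: algebra_simps)
      also have "lam * (t + 1) \<le> lam * pt" using n lam by (intro mult_left_mono) auto
      finally show "n \<in> {0..<lam * pt}" using n lam by simp
    next
      fix n assume n: "n \<in> {0..<lam * pt}"
      have "n div lam < pt"
      proof (rule ccontr)
        assume "\<not> n div lam < pt"
        hence "lam * pt \<le> lam * (n div lam)" using lam by (intro mult_left_mono) auto
        also have "lam * (n div lam) \<le> n"
        proof -
          have "lam * (n div lam) + n mod lam = n" by (rule mult_div_mod_eq)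
          thus ?thesis using pos_mod_sign[OF lam, of n] by linarith
        qed
        finally show False using n by simp
      qed
      moreover have "0 \<le> n div lam" using n lam by (simp add: pos_imp_zdiv_nonneg_iff)
      moreover have "n = lam * (n div lam) + n mod lam" by simp
      moreover have "n mod lam \<in> {0..<lam}" using lam by simp
      ultimately show "n \<in> (\<lambda>(m,t). lam * t + m) ` ({0..<lam} \<times> {0..<pt})"
        by (auto intro!: image_eqI[where x = "(n mod lam, n div lam)"])
    qed
  qed
  have "(\<Sum>n\<in>{0..<lam * pt}. H n) = (\<Sum>x\<in>{0..<lam} \<times> {0..<pt}. H ((\<lambda>(m,t). lam * t + m) x))"
    using sum.reindex_bij_betw[OF bij, of H] by simp
  also have "\<dots> = (\<Sum>m\<in>{0..<lam}. \<Sum>t\<in>{0..<pt}. H (lam * t + m))"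
    by (simp add: sum.cartesian_product split_beta)
  finally show ?thesis .
qed

lemma frame_sum:
  "frame_op L h \<Gamma> f l = (\<Sum>p\<in>\<Gamma>. inner_L L f (tf_shift L (fst p) (snd p) h) * tf_shift L (fst p) (snd p) h l)"
  unfolding frame_op_def by (simp add: split_beta)

lemma claim2:
  fixes L a b s lam :: int and g f :: signal
  assumes L: "0 < L"
  shows "inner_L L f (modul L (k * b + (m * s) mod b) (transl L ((lam * nt + m) * a) g))
       = exp (- 2 * pi * \<i> * of_int nt * of_int (lam * a) * of_int ((m * s) mod b) / of_int L)
         * inner_L L f (modul L (k * b) (transl L (nt * (lam * a)) (modul L ((m * s) mod b) (transl L (m * a) g))))"
proof -
  define r where "r = (m * s) mod b"
  define c where "c = ee L (- (nt * (lam * a) * r))"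
  have Lne: "L \<noteq> 0" using L by simp
  have "modul L (k * b) (transl L (nt * (lam * a)) (modul L r (transl L (m * a) g)))
      = (\<lambda>l. c * tf_shift L ((lam * nt + m) * a) (k * b + r) g l)"
  proof
    fix l
    have "modul L (k * b) (transl L (nt * (lam * a)) (modul L r (transl L (m * a) g))) l
        = tf_shift L (nt * (lam * a)) (k * b) (tf_shift L (m * a) r g) l"
      unfolding tf_shift_def ..
    also have "\<dots> = c * tf_shift L (nt * (lam * a) + m * a) (k * b + r) g l"
      unfolding c_def by (rule tf_shift_comp[OF Lne])
    also have "nt * (lam * a) + m * a = (lam * nt + m) * a" by (simp add: algebra_simps)
    finally show "modul L (k * b) (transl L (nt * (lam * a)) (modul L r (transl L (m * a) g))) l
       = c * tf_shift L ((lam * nt + m) * a) (k * b + r) g l" .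
  qed
  hence "inner_L L f (modul L (k * b) (transl L (nt * (lam * a)) (modul L r (transl L (m * a) g))))
       = cnj c * inner_L L f (tf_shift L ((lam * nt + m) * a) (k * b + r) g)"
    by (simp add: inner_scale)
  moreover have "exp (- 2 * pi * \<i> * of_int nt * of_int (lam * a) * of_int r / of_int L) = c"
    unfolding c_def ee_def by (simp add: algebra_simps)
  moreover have "c * cnj c = 1" using ee_cnj[of L "- (nt * (lam * a) * r)"] unfolding c_def
    by (simp add: mult.commute)
  ultimately show ?thesis unfolding r_def[symmetric] tf_shift_def[symmetric]
    by (simp add: mult.assoc[symmetric])
qed


lemma claim1:
  fixes L a b s :: int and g f :: signal
  assumes L: "0 < L" and a: "0 < a" and ad: "a dvd L" and bd: "b dvd L"
    and s0: "0 \<le> s" and sb: "s < b" and sm: "(a * b) div gcd (a * b) L dvd s"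
  shows "frame_op L g (mat_lattice L a 0 s b) f l
    = (\<Sum>m\<in>{0..<b div gcd b s}. frame_op L (modul L ((m * s) mod b) (transl L (m * a) g))
          (gen_subgroup2 L ((b div gcd b s) * a, 0) (0, b)) f l)"
proof -
  have b: "0 < b" using s0 sb by simp
  have Lne: "L \<noteq> 0" using L by simp
  note nt = nt_facts[OF L a ad bd s0 sb sm]
  define lam where "lam = b div gcd b s"
  define atil where "atil = lam * a"
  define r where "r = (\<lambda>m. (m * s) mod b)"
  define S where "S = (\<lambda>c. {w\<in>{0..<L}. w mod b = c mod b})"
  define F where "F = (\<lambda>x w. inner_L L f (tf_shift L x w g) * tf_shift L x w g l)"
  have lam0: "0 < lam" using nt(2) lam_def by simp
  have blam: "b dvd lam * s" using nt(3) lam_def by simp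
  obtain pt where pt: "L div a = lam * pt" using nt(4) lam_def by (auto elim: dvdE)
  have La: "L = a * (L div a)" using ad by simp
  have Lat: "L = atil * pt" using La pt atil_def by (simp add: algebra_simps)
  have atil0: "0 < atil" using lam0 a atil_def by simp
  have atd: "atil dvd L" using Lat by simp
  have ptd: "L div atil = pt" using Lat atil0 by simp
  have Fp: "F (x mod L) (w mod L) = F x w" for x w
    unfolding F_def using tf_shift_mod[OF Lne] by simp
  have Fp1: "F (x mod L) w = F x w" for x w
    using Fp[of x w] Fp[of "x mod L" w] by simp
  have Fp2: "F x (w mod L) = F x w" for x w
    using Fp[of x w] Fp[of x "w mod L"] by simp
  have G: "inner_L L f (tf_shift L x w (tf_shift L x0 w0 g)) * tf_shift L x w (tf_shift L x0 w0 g) l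
      = F (x + x0) (w + w0)" for x w x0 w0
  proof -
    define c where "c = ee L (- (x * w0))"
    have e: "tf_shift L x w (tf_shift L x0 w0 g) = (\<lambda>l. c * tf_shift L (x + x0) (w + w0) g l)"
      unfolding c_def using tf_shift_comp[OF Lne] by blast
    have cc: "cnj c * c = 1" unfolding c_def by (rule ee_cnj)
    show ?thesis unfolding e inner_scale F_def
      by (simp add: algebra_simps) (metis cc mult.assoc mult.commute mult_1_right)
  qed
  have inner: "(\<Sum>k\<in>{0..<L div b}. F x ((c + k * b) mod L)) = (\<Sum>w\<in>S c. F x w)" for x c
    unfolding S_def using sum.reindex_bij_betw[OF residue_bij[OF b bd L], of "F x" c] by simp
  note LI = lam_image[OF L a b ad bd nt(1)]
  have "frame_op L g (mat_lattice L a 0 s b) f l = (\<Sum>p\<in>mat_lattice L a 0 s b. F (fst p) (snd p))"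
    unfolding frame_sum F_def ..
  also have "\<dots> = (\<Sum>p\<in>{0..<L div a} \<times> {0..<L div b}. F ((fst p * a) mod L) ((fst p * s + snd p * b) mod L))"
    unfolding LI(1) by (subst sum.reindex[OF LI(2)]) (simp add: split_beta)
  also have "\<dots> = (\<Sum>n\<in>{0..<L div a}. \<Sum>k\<in>{0..<L div b}. F (n * a) ((n * s + k * b) mod L))"
    unfolding sum.cartesian_product by (simp add: Fp1 split_beta)
  also have "\<dots> = (\<Sum>n\<in>{0..<L div a}. \<Sum>w\<in>S (n * s). F (n * a) w)"
    using inner by simp
  also have "\<dots> = (\<Sum>m\<in>{0..<lam}. \<Sum>t\<in>{0..<pt}. \<Sum>w\<in>S ((lam * t + m) * s). F ((lam * t + m) * a) w)"
    unfolding pt by (rule split_sum[OF lam0])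
  also have "\<dots> = (\<Sum>m\<in>{0..<lam}. \<Sum>t\<in>{0..<pt}. \<Sum>w\<in>S (r m). F (t * atil + m * a) w)"
  proof (rule sum.cong[OF refl], rule sum.cong[OF refl])
    fix m t
    have e0: "((lam * t + m) * s) mod b = (t * (lam * s) + m * s) mod b" by (simp add: algebra_simps)
    obtain q where q: "lam * s = b * q" using blam by blast
    have "(t * (lam * s) + m * s) mod b = (m * s + (t * q) * b) mod b" by (simp add: q algebra_simps)
    also have "\<dots> = (m * s) mod b" by (rule mod_mult_self1)
    finally have "((lam * t + m) * s) mod b = (m * s) mod b" using e0 by simp
    hence "S ((lam * t + m) * s) = S (r m)" unfolding S_def r_def by simp
    moreover have "(lam * t + m) * a = t * atil + m * a" unfolding atil_def by (simp add: algebra_simps)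
    ultimately show "(\<Sum>w\<in>S ((lam * t + m) * s). F ((lam * t + m) * a) w) = (\<Sum>w\<in>S (r m). F (t * atil + m * a) w)"
      by simp
  qed
  also have "\<dots> = (\<Sum>m\<in>{0..<lam}. frame_op L (modul L (r m) (transl L (m * a) g))
          (gen_subgroup2 L (atil, 0) (0, b)) f l)"
  proof (rule sum.cong[OF refl])
    fix m
    note TI = lamt_image[OF L atil0 b atd bd]
    have "frame_op L (modul L (r m) (transl L (m * a) g)) (gen_subgroup2 L (atil, 0) (0, b)) f l
        = (\<Sum>p\<in>gen_subgroup2 L (atil, 0) (0, b). F (fst p + m * a) (snd p + r m))"
      unfolding frame_sum tf_shift_def[symmetric] G ..
    also have "\<dots> = (\<Sum>p\<in>{0..<pt} \<times> {0..<L div b}. F ((fst p * atil) mod L + m * a) ((snd p * b) mod L + r m))"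
      unfolding TI(1) ptd[symmetric] by (subst sum.reindex[OF TI(2)]) (simp add: split_beta)
    also have "\<dots> = (\<Sum>t\<in>{0..<pt}. \<Sum>k\<in>{0..<L div b}. F (t * atil + m * a) ((r m + k * b) mod L))"
    proof -
      have "F ((x * atil) mod L + m * a) ((y * b) mod L + r m) = F (x * atil + m * a) ((r m + y * b) mod L)" for x y
      proof -
        have "F ((x * atil) mod L + m * a) ((y * b) mod L + r m)
            = F (((x * atil) mod L + m * a) mod L) (((y * b) mod L + r m) mod L)" using Fp by simp
        also have "\<dots> = F ((x * atil + m * a) mod L) ((r m + y * b) mod L)"
          by (simp add: mod_add_right_eq add.commute)
        also have "\<dots> = F (x * atil + m * a) ((r m + y * b) mod L)" by (rule Fp1)
        finally show ?thesis .
      qed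
      thus ?thesis unfolding sum.cartesian_product by (simp add: split_beta)
    qed
    also have "\<dots> = (\<Sum>t\<in>{0..<pt}. \<Sum>w\<in>S (r m). F (t * atil + m * a) w)"
      using inner by simp
    finally show "(\<Sum>t\<in>{0..<pt}. \<Sum>w\<in>S (r m). F (t * atil + m * a) w)
       = frame_op L (modul L (r m) (transl L (m * a) g)) (gen_subgroup2 L (atil, 0) (0, b)) f l" by simp
  qed
  finally show ?thesis unfolding r_def lam_def atil_def .
qed

theorem proposition3p2:
  fixes L a b s :: int and g :: signal
  assumes L_pos: "0 < L"
    and a_pos: "0 < a"
    and a_dvd: "a dvd L" and b_dvd: "b dvd L"
    and s_nonneg: "0 \<le> s" and s_less: "s < b"
    and s_mult: "(a * b) div gcd (a * b) L dvd s"
  shows "(let Lam = mat_lattice L a 0 s b;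
             lam2 = b div gcd b s;
             atil = lam2 * a;
             Lamt = gen_subgroup2 L (atil, 0) (0, b);
             gm = (\<lambda>m. modul L ((m * s) mod b) (transl L (m * a) g))
         in (\<forall>f. frame_op L g Lam f = (\<lambda>l. \<Sum>m\<in>{0..<lam2}. frame_op L (gm m) Lamt f l))
          \<and> (\<forall>f n k. n \<in> {0..<L div a} \<longrightarrow> k \<in> {0..<L div b} \<longrightarrow>
               (let nt = n div lam2; m = n - lam2 * nt in
                 inner_L L f (modul L (k * b + (m * s) mod b) (transl L (n * a) g))
                 = exp (- 2 * pi * \<i> * of_int nt * of_int atil * of_int ((m * s) mod b) / of_int L)
                   * inner_L L f (modul L (k * b) (transl L (nt * atil) (gm m))))))"
proof -
  have c1: "frame_op L g (mat_lattice L a 0 s b) f = (\<lambda>l. \<Sum>m\<in>{0..<b div gcd b s}.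
      frame_op L (modul L ((m * s) mod b) (transl L (m * a) g))
        (gen_subgroup2 L ((b div gcd b s) * a, 0) (0, b)) f l)" for f
    using claim1[OF L_pos a_pos a_dvd b_dvd s_nonneg s_less s_mult] by blast
  have c2: "inner_L L f (modul L (k * b + ((n - (b div gcd b s) * (n div (b div gcd b s))) * s) mod b) (transl L (n * a) g))
     = exp (- 2 * pi * \<i> * of_int (n div (b div gcd b s)) * of_int ((b div gcd b s) * a)
         * of_int (((n - (b div gcd b s) * (n div (b div gcd b s))) * s) mod b) / of_int L)
       * inner_L L f (modul L (k * b) (transl L ((n div (b div gcd b s)) * ((b div gcd b s) * a))
           (modul L (((n - (b div gcd b s) * (n div (b div gcd b s))) * s) mod b)
              (transl L ((n - (b div gcd b s) * (n div (b div gcd b s))) * a) g))))" for f n k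
    using claim2[OF L_pos, of f k b "n - (b div gcd b s) * (n div (b div gcd b s))" s "b div gcd b s"
        "n div (b div gcd b s)" a g] by simp
  show ?thesis unfolding Let_def using c1 c2 by simp
qed

end
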